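(* The Heawood graph is $4$-ordered hamiltonian.
   Context: A simple graph $G$ is called $k$-ordered hamiltonian if for every sequence $v_1,\ldots,v_k$ of $k$ distinct vertices of $G$ there exists a hamiltonian cycle in $G$ (a cycle through all vertices) containing these $k$ vertices in the specified (cyclic) order. The Heawood graph is the $3$-regular bipartite graph on $14$ vertices given by the point–line incidence graph of the Fano plane; equivalently, it is the graph with vertices $0,1,\ldots,13$ forming a hamiltonian cycle $0-1-2-\cdots-13-0$, together with the chords joining $i$ and $i+5 \pmod{14}$ for every even $i$. *)

theory Defs
  imports Main "HOL-Library.Sublist"
begin

text \<open>A simple graph is given by a vertex set V and a symmetric irreflexive
adjacency relation E.\<close>

definition hamiltonian_cycle :: "'a set \<Rightarrow> ('a \<Rightarrow> 'a \<Rightarrow> bool) \<Rightarrow> 'a list \<Rightarrow> bool" where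
  "hamiltonian_cycle V E c \<longleftrightarrow>
     distinct c \<and> set c = V \<and> 3 \<le> length c \<and>
     (\<forall>i < length c. E (c ! i) (c ! ((i + 1) mod length c)))"

text \<open>Since every rotation of a hamiltonian
cycle list is again one, requiring the sequence to be a subsequence of the list
is the same as requiring the cyclic order.\<close>

definition k_ordered_hamiltonian :: "'a set \<Rightarrow> ('a \<Rightarrow> 'a \<Rightarrow> bool) \<Rightarrow> nat \<Rightarrow> bool" where
  "k_ordered_hamiltonian V E k \<longleftrightarrow>
     (\<forall>vs. length vs = k \<and> distinct vs \<and> set vs \<subseteq> V \<longrightarrow>
        (\<exists>c. hamiltonian_cycle V E c \<and> subseq vs c))"

definition heawood_V :: "nat set" where
  "heawood_V = {..<14}"

definition heawood_E :: "nat \<Rightarrow> nat \<Rightarrow> bool" where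
  "heawood_E i j \<longleftrightarrow> i < 14 \<and> j < 14 \<and>
     (j = (i + 1) mod 14 \<or> i = (j + 1) mod 14 \<or>
      (even i \<and> j = (i + 5) mod 14) \<or> (even j \<and> i = (j + 5) mod 14))"

end

theory Submission
  imports Defs
begin

definition cycs :: "nat list list" where
  "cycs = [[0,1,2,3,4,9,10,11,12,13,8,7,6,5],
  [0,5,6,7,8,13,12,11,10,9,4,3,2,1],
  [0,1,10,11,6,5,4,9,8,7,2,3,12,13],
  [0,13,12,3,2,7,8,9,4,5,6,11,10,1],
  [0,13,8,9,10,1,2,7,6,11,12,3,4,5],
  [0,5,4,3,12,11,6,7,2,1,10,9,8,13],
  [0,1,2,3,4,5,6,7,8,9,10,11,12,13],
  [0,13,12,11,10,9,8,7,6,5,4,3,2,1],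
  [0,1,10,11,6,7,2,3,12,13,8,9,4,5],
  [0,5,4,9,8,13,12,3,2,7,6,11,10,1],
  [0,13,8,7,2,1,10,9,4,3,12,11,6,5],
  [0,5,6,11,12,3,4,9,10,1,2,7,8,13],
  [0,1,2,3,12,13,8,7,6,11,10,9,4,5],
  [0,5,4,9,10,11,6,7,8,13,12,3,2,1],
  [0,1,10,9,8,7,2,3,4,5,6,11,12,13],
  [0,13,12,11,6,5,4,3,2,7,8,9,10,1],
  [0,13,8,9,4,3,12,11,10,1,2,7,6,5],
  [0,5,6,7,2,1,10,11,12,3,4,9,8,13],
  [0,1,2,7,8,13,12,3,4,9,10,11,6,5],
  [0,1,10,9,4,5,6,11,12,3,2,7,8,13],
  [0,13,12,11,6,7,8,9,10,1,2,3,4,5],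
  [0,5,4,3,2,1,10,9,8,7,6,11,12,13],
  [0,5,6,11,10,9,4,3,12,13,8,7,2,1],
  [0,13,8,9,4,5,6,7,2,3,12,11,10,1],
  [0,1,10,11,12,3,2,7,6,5,4,9,8,13],
  [0,1,2,7,6,11,10,9,8,13,12,3,4,5],
  [0,1,10,11,12,13,8,9,4,3,2,7,6,5],
  [0,13,8,7,2,3,12,11,6,5,4,9,10,1],
  [0,5,4,9,8,7,6,11,10,1,2,3,12,13],
  [0,5,6,7,2,3,4,9,8,13,12,11,10,1],
  [0,13,12,3,2,1,10,11,6,7,8,9,4,5],
  [0,5,4,3,12,13,8,9,10,11,6,7,2,1],
  [0,1,2,3,12,11,10,9,4,5,6,7,8,13],
  [0,1,2,7,8,9,10,11,6,5,4,3,12,13],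
  [0,13,8,7,6,5,4,9,10,11,12,3,2,1],
  [0,13,12,3,4,5,6,11,10,9,8,7,2,1],
  [0,1,10,9,8,13,12,11,6,7,2,3,4,5],
  [0,13,12,3,4,9,8,7,2,1,10,11,6,5],
  [0,5,4,3,2,7,6,11,12,13,8,9,10,1],
  [0,5,6,11,10,1,2,7,8,9,4,3,12,13]]"

definition EL :: "(nat * nat) list" where
  "EL = [(0,1),(0,5),(0,13),(1,0),(1,2),(1,10),(2,1),(2,3),(2,7),(3,2),(3,4),(3,12),(4,3),(4,5),(4,9),(5,0),(5,4),(5,6),(6,5),(6,7),(6,11),(7,2),(7,6),(7,8),(8,7),(8,9),(8,13),(9,4),(9,8),(9,10),(10,1),(10,9),(10,11),(11,6),(11,10),(11,12),(12,3),(12,11),(12,13),(13,0),(13,8),(13,12)]"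

definition PL :: "nat list list" where
  "PL = [[0,1,2,3,4,5,6,7,8,9,10,11,12,13],
  [1,0,5,4,3,2,7,6,11,12,13,8,9,10],
  [2,1,0,5,4,3,12,13,8,9,10,11,6,7],
  [3,2,1,0,5,4,9,10,11,6,7,8,13,12],
  [4,3,2,1,0,5,6,7,8,13,12,11,10,9],
  [5,0,1,2,3,4,9,10,11,12,13,8,7,6],
  [6,5,0,1,2,7,8,13,12,3,4,9,10,11],
  [7,2,1,0,5,6,11,10,9,4,3,12,13,8],
  [8,7,2,1,0,13,12,3,4,5,6,11,10,9],
  [9,4,3,2,1,10,11,12,13,0,5,6,7,8],
  [10,1,0,5,4,9,8,13,12,3,2,7,6,11],
  [11,6,5,0,1,10,9,4,3,2,7,8,13,12],
  [12,3,2,1,0,13,8,7,6,5,4,9,10,11],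
  [13,0,1,2,3,12,11,10,9,4,5,6,7,8],
  [0,5,4,3,2,1,10,9,8,7,6,11,12,13],
  [0,5,6,7,2,1,10,11,12,3,4,9,8,13],
  [0,1,2,7,6,5,4,3,12,11,10,9,8,13],
  [0,13,8,7,2,1,10,9,4,3,12,11,6,5],
  [0,1,10,9,4,5,6,11,12,3,2,7,8,13],
  [0,1,10,11,6,5,4,9,8,7,2,3,12,13],
  [0,13,12,3,2,1,10,11,6,7,8,9,4,5],
  [0,1,2,7,8,13,12,3,4,9,10,11,6,5],
  [0,1,2,3,12,13,8,7,6,11,10,9,4,5]]"

definition gaI :: "nat list" where "gaI = [0,1,2,3,4,5,6,7,8,9,10,11,12,13]"
definition hbI :: "nat list" where "hbI = [0,0,0,0,14,14,15,16,17,18,18,19,20,17]"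
definition cbL :: "nat list" where "cbL = [0,1,2,3,2,1,2,3,2,3,2,3,2,1]"
definition hcI :: "nat list list" where "hcI = [[0,0,0,0,0,0,0,0,0,0,0,0,0,0],
  [0,0,0,0,0,0,16,16,21,18,18,19,22,22],
  [0,0,0,0,0,0,16,16,21,0,0,22,22,22],
  [0,0,0,0,14,14,0,0,22,14,14,20,20,20],
  [0,0,0,0,0,0,0,0,0,0,0,0,0,0],
  [0,0,0,0,0,0,0,0,0,0,0,0,0,0],
  [0,0,0,0,0,0,0,0,0,0,0,0,0,0],
  [0,0,0,0,0,0,0,0,0,0,0,0,0,0],
  [0,0,0,0,0,0,0,0,0,0,0,0,0,0],
  [0,0,0,0,0,0,0,0,0,0,0,0,0,0],
  [0,0,0,0,0,0,0,0,0,0,0,0,0,0],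
  [0,0,0,0,0,0,0,0,0,0,0,0,0,0],
  [0,0,0,0,0,0,0,0,0,0,0,0,0,0],
  [0,0,0,0,0,0,0,0,0,0,0,0,0,0]]"
definition ccL :: "nat list list" where "ccL = [[0,0,0,0,0,0,0,0,0,0,0,0,0,0],
  [0,0,2,3,4,5,4,3,4,3,2,3,4,5],
  [0,1,0,3,4,5,4,3,4,9,10,9,4,5],
  [0,1,2,0,2,1,6,7,6,7,6,7,2,1],
  [0,0,0,0,0,0,0,0,0,0,0,0,0,0],
  [0,0,0,0,0,0,0,0,0,0,0,0,0,0],
  [0,0,0,0,0,0,0,0,0,0,0,0,0,0],
  [0,0,0,0,0,0,0,0,0,0,0,0,0,0],
  [0,0,0,0,0,0,0,0,0,0,0,0,0,0],
  [0,0,0,0,0,0,0,0,0,0,0,0,0,0],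
  [0,0,0,0,0,0,0,0,0,0,0,0,0,0],
  [0,0,0,0,0,0,0,0,0,0,0,0,0,0],
  [0,0,0,0,0,0,0,0,0,0,0,0,0,0],
  [0,0,0,0,0,0,0,0,0,0,0,0,0,0]]"
definition pairs :: "(nat * nat) list" where "pairs = [(1,2),(1,3),(1,4),(1,5),(2,1),(2,3),(2,4),(2,5),(2,9),(2,10),(3,1),(3,2),(3,6),(3,7)]"

definition ham_ok :: "nat list \<Rightarrow> bool" where
  "ham_ok c \<longleftrightarrow> distinct c \<and> length c = 14 \<and> list_all (\<lambda>x. x < 14) c \<and>
     list_all (\<lambda>i. heawood_E (c ! i) (c ! ((i + 1) mod 14))) [0..<14]"

definition aut_ok :: "nat list \<Rightarrow> bool" where
  "aut_ok p \<longleftrightarrow> length p = 14 \<and> distinct p \<and> list_all (\<lambda>x. x < 14) p \<and>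
     list_all (\<lambda>(i,j). heawood_E (p ! i) (p ! j)) EL"

definition good :: "nat list \<Rightarrow> bool" where
  "good vs = list_ex (\<lambda>c. subseq vs c) cycs"

definition covered :: "nat list \<Rightarrow> bool" where
  "covered t \<longleftrightarrow> (\<exists>c. hamiltonian_cycle heawood_V heawood_E c \<and> subseq t c)"

lemma ham_ok_all: "list_all ham_ok cycs" by code_simp

lemma aut_ok_all: "list_all aut_ok PL" by code_simp

lemma C2: "list_all (\<lambda>a. gaI ! a < length PL \<and> PL ! (gaI ! a) ! 0 = a) [0..<14]"
  by code_simp

lemma C3: "list_all (\<lambda>b. b = 0 \<or> (hbI ! b < length PL \<and> PL ! (hbI ! b) ! 0 = 0 \<and>
    PL ! (hbI ! b) ! (cbL ! b) = b \<and> cbL ! b \<in> {1,2,3})) [0..<14]"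
  by code_simp

lemma C4: "list_all (\<lambda>B. list_all (\<lambda>c. c = 0 \<or> c = B \<or> (hcI ! B ! c < length PL \<and>
    PL ! (hcI ! B ! c) ! 0 = 0 \<and> PL ! (hcI ! B ! c) ! B = B \<and>
    PL ! (hcI ! B ! c) ! (ccL ! B ! c) = c \<and> (B, ccL ! B ! c) \<in> set pairs)) [0..<14]) [1,2,3]"
  by code_simp

lemma C5: "list_all (\<lambda>(B,C). list_all (\<lambda>d. \<not> distinct [0,B,C,d] \<or> good [0,B,C,d]) [0..<14]) pairs"
  by code_simp

lemma EL_complete: "heawood_E i j \<Longrightarrow> (i,j) \<in> set EL"
proof -
  have "list_all (\<lambda>i. list_all (\<lambda>j. heawood_E i j \<longrightarrow> (i,j) \<in> set EL) [0..<14]) [0..<14]"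
    by code_simp
  moreover assume "heawood_E i j"
  moreover then have "i < 14" "j < 14" by (auto simp: heawood_E_def)
  ultimately show ?thesis by (auto simp: list_all_iff)
qed

lemma ham_ok_ham: "ham_ok cy \<Longrightarrow> hamiltonian_cycle heawood_V heawood_E cy"
proof -
  assume "ham_ok cy"
  then have d: "distinct cy" and l: "length cy = 14" and s: "set cy \<subseteq> {..<14}"
   and e: "\<And>i. i < 14 \<Longrightarrow> heawood_E (cy ! i) (cy ! ((i + 1) mod 14))"
    unfolding ham_ok_def by (auto simp: list_all_iff)
  have sc: "set cy = {..<14}"
    using d l s by (metis card_lessThan card_subset_eq distinct_card finite_lessThan)
  show ?thesis unfolding hamiltonian_cycle_def heawood_V_def using d l sc e by auto
qed

lemma aut_props:
  assumes "aut_ok p"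
  shows "length p = 14" "distinct p" "set p = {..<14}"
    "\<And>i j. heawood_E i j \<Longrightarrow> heawood_E (p ! i) (p ! j)"
proof -
  show l: "length p = 14" and d: "distinct p" using assms by (auto simp: aut_ok_def)
  have s: "set p \<subseteq> {..<14}" using assms by (auto simp: aut_ok_def list_all_iff)
  show "set p = {..<14}"
    using d l s by (metis card_lessThan card_subset_eq distinct_card finite_lessThan)
  fix i j assume "heawood_E i j"
  then have "(i,j) \<in> set EL" by (rule EL_complete)
  then show "heawood_E (p ! i) (p ! j)" using assms by (auto simp: aut_ok_def list_all_iff)
qed

lemma preim:
  assumes "aut_ok p" "v < 14"
  obtains u where "u < 14" "p ! u = v"
proof -
  have "v \<in> set p" using aut_props(3)[OF assms(1)] assms(2) by simp
  then obtain u where "u < length p" "p ! u = v" by (metis in_set_conv_nth)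
  then show ?thesis using that aut_props(1)[OF assms(1)] by simp
qed

lemma cov_map:
  assumes "aut_ok p" "covered t"
  shows "covered (map (\<lambda>x. p ! x) t)"
proof -
  obtain cy where cy: "hamiltonian_cycle heawood_V heawood_E cy" "subseq t cy"
    using assms(2) unfolding covered_def by blast
  have d: "distinct cy" and sc: "set cy = {..<14}"
    and e: "\<And>i. i < length cy \<Longrightarrow> heawood_E (cy ! i) (cy ! ((i + 1) mod length cy))"
    using cy(1) unfolding hamiltonian_cycle_def heawood_V_def by auto
  have l: "length cy = 14" using d sc by (metis card_lessThan distinct_card)
  have pl: "length p = 14" "distinct p" "set p = {..<14}" using aut_props[OF assms(1)] by auto
  have inj: "inj_on (\<lambda>x. p ! x) {..<14}"
    using pl by (simp add: inj_on_def nth_eq_iff_index_eq)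
  have "distinct (map (\<lambda>x. p ! x) cy)" using d inj sc by (simp add: distinct_map)
  moreover have "set (map (\<lambda>x. p ! x) cy) = {..<14}"
  proof -
    have "(\<lambda>x. p ! x) ` {..<14} = set p" using pl(1) by (auto simp: in_set_conv_nth)
    then show ?thesis using sc pl(3) by simp
  qed
  moreover have "\<forall>i < length (map (\<lambda>x. p ! x) cy). heawood_E (map (\<lambda>x. p ! x) cy ! i)
      (map (\<lambda>x. p ! x) cy ! ((i + 1) mod length (map (\<lambda>x. p ! x) cy)))"
    using e aut_props(4)[OF assms(1)] l by auto
  ultimately have "hamiltonian_cycle heawood_V heawood_E (map (\<lambda>x. p ! x) cy)"
    using l unfolding hamiltonian_cycle_def heawood_V_def by auto
  moreover have "subseq (map (\<lambda>x. p ! x) t) (map (\<lambda>x. p ! x) cy)"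
    by (rule subseq_map[OF cy(2)])
  ultimately show ?thesis unfolding covered_def by blast
qed

lemma PL_aut: "i < length PL \<Longrightarrow> aut_ok (PL ! i)"
  using aut_ok_all by (simp add: list_all_length)

lemma base:
  assumes "(B, C) \<in> set pairs" "d < 14" "distinct [0,B,C,d]"
  shows "covered [0,B,C,d]"
proof -
  have "d \<in> set [0..<14]" using assms(2) by simp
  then have "\<not> distinct [0,B,C,d] \<or> good [0,B,C,d]" using C5 assms(1) unfolding list_all_iff by fastforce
  then have "good [0,B,C,d]" using assms(3) by blast
  then obtain cy where "cy \<in> set cycs" "subseq [0,B,C,d] cy" unfolding good_def
    by (auto simp: list_ex_iff)
  moreover then have "ham_ok cy" using ham_ok_all by (auto simp: list_all_iff)
  ultimately show ?thesis unfolding covered_def using ham_ok_ham by blast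
qed

lemma step2:
  assumes B: "B \<in> {1,2,3}" and lt: "c < 14" "d < 14" and dd: "distinct [0,B,c,d]"
  shows "covered [0,B,c,d]"
proof -
  have c4: "hcI ! B ! c < length PL \<and> PL ! (hcI ! B ! c) ! 0 = 0 \<and> PL ! (hcI ! B ! c) ! B = B \<and>
    PL ! (hcI ! B ! c) ! (ccL ! B ! c) = c \<and> (B, ccL ! B ! c) \<in> set pairs"
  proof -
    have "c \<in> set [0..<14]" using lt by simp
    moreover have "B \<in> set [1,2,3]" using B by simp
    ultimately have "c = 0 \<or> c = B \<or> (hcI ! B ! c < length PL \<and>
    PL ! (hcI ! B ! c) ! 0 = 0 \<and> PL ! (hcI ! B ! c) ! B = B \<and>
    PL ! (hcI ! B ! c) ! (ccL ! B ! c) = c \<and> (B, ccL ! B ! c) \<in> set pairs)"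
      using C4 unfolding list_all_iff by blast
    then show ?thesis using dd by auto
  qed
  define k where "k = PL ! (hcI ! B ! c)"
  define C where "C = ccL ! B ! c"
  have ak: "aut_ok k" using c4 PL_aut k_def by blast
  obtain d' where d': "d' < 14" "k ! d' = d" using preim[OF ak lt(2)] by blast
  have k: "k ! 0 = 0" "k ! B = B" "k ! C = c" "(B, C) \<in> set pairs" using c4 k_def C_def by auto
  have mp: "map (\<lambda>x. k ! x) [0,B,C,d'] = [0,B,c,d]" using k d' by simp
  have "distinct [0,B,C,d']" using dd mp by (metis distinct_map)
  then have "covered [0,B,C,d']" using base k(4) d'(1) by blast
  then have "covered (map (\<lambda>x. k ! x) [0,B,C,d'])" using cov_map ak by blast
  then show ?thesis using k d' by simp
qed

lemma step1:
  assumes lt: "b < 14" "c < 14" "d < 14" and dd: "distinct [0,b,c,d]"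
  shows "covered [0,b,c,d]"
proof -
  have c3: "hbI ! b < length PL \<and> PL ! (hbI ! b) ! 0 = 0 \<and>
    PL ! (hbI ! b) ! (cbL ! b) = b \<and> cbL ! b \<in> {1,2,3}"
  proof -
    have "b \<in> set [0..<14]" using lt by simp
    then have "b = 0 \<or> (hbI ! b < length PL \<and> PL ! (hbI ! b) ! 0 = 0 \<and>
    PL ! (hbI ! b) ! (cbL ! b) = b \<and> cbL ! b \<in> {1,2,3})"
      using C3 unfolding list_all_iff by blast
    then show ?thesis using dd by simp
  qed
  define h where "h = PL ! (hbI ! b)"
  define B where "B = cbL ! b"
  have ah: "aut_ok h" using c3 PL_aut h_def by blast
  obtain c' where c': "c' < 14" "h ! c' = c" using preim[OF ah lt(2)] by blast
  obtain d' where d': "d' < 14" "h ! d' = d" using preim[OF ah lt(3)] by blast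
  have h: "h ! 0 = 0" "h ! B = b" "B \<in> {1,2,3}" using c3 h_def B_def by auto
  have mp: "map (\<lambda>x. h ! x) [0,B,c',d'] = [0,b,c,d]" using h c' d' by simp
  have "distinct [0,B,c',d']" using dd mp by (metis distinct_map)
  then have "covered [0,B,c',d']" using step2 h(3) c'(1) d'(1) by blast
  then have "covered (map (\<lambda>x. h ! x) [0,B,c',d'])" using cov_map ah by blast
  then show ?thesis using h c' d' by simp
qed

lemma step0:
  assumes lt: "a < 14" "b < 14" "c < 14" "d < 14" and dd: "distinct [a,b,c,d]"
  shows "covered [a,b,c,d]"
proof -
  have c2: "gaI ! a < length PL \<and> PL ! (gaI ! a) ! 0 = a"
  proof -
    have "a \<in> set [0..<14]" using lt by simp
    then show ?thesis using C2 unfolding list_all_iff by blast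
  qed
  define g where "g = PL ! (gaI ! a)"
  have ag: "aut_ok g" using c2 PL_aut g_def by blast
  obtain b' where b': "b' < 14" "g ! b' = b" using preim[OF ag lt(2)] by blast
  obtain c' where c': "c' < 14" "g ! c' = c" using preim[OF ag lt(3)] by blast
  obtain d' where d': "d' < 14" "g ! d' = d" using preim[OF ag lt(4)] by blast
  have g0: "g ! 0 = a" using c2 g_def by simp
  have mp: "map (\<lambda>x. g ! x) [0,b',c',d'] = [a,b,c,d]" using g0 b' c' d' by simp
  have "distinct [0,b',c',d']" using dd mp by (metis distinct_map)
  then have "covered [0,b',c',d']" using step1 b'(1) c'(1) d'(1) by blast
  then have "covered (map (\<lambda>x. g ! x) [0,b',c',d'])" using cov_map ag by blast
  then show ?thesis using g0 b' c' d' by simp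
qed

theorem theorem3p3:
  shows "k_ordered_hamiltonian heawood_V heawood_E 4"
  unfolding k_ordered_hamiltonian_def
proof (intro allI impI)
  fix vs :: "nat list"
  assume H: "length vs = 4 \<and> distinct vs \<and> set vs \<subseteq> heawood_V"
  then have "length vs = Suc (Suc (Suc (Suc 0)))" by simp
  then have "\<exists>a b c d. vs = [a,b,c,d]" by (auto simp: length_Suc_conv)
  then obtain a b c d where vs: "vs = [a,b,c,d]" by blast
  have lt: "a < 14" "b < 14" "c < 14" "d < 14" using H vs by (auto simp: heawood_V_def)
  have "covered vs" using step0 lt H vs by blast
  then show "\<exists>c. hamiltonian_cycle heawood_V heawood_E c \<and> subseq vs c"
    unfolding covered_def by blast
qed

end
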